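(* Let $T=(T_t)_{t\ge 0}$ be a subordinator with Laplace exponent $\phi$, i.e. $\mathbb{E}e^{-\lambda T_t}=e^{-t\phi(\lambda)}$ for $\lambda>0$, and set $H(\lambda)=\phi(\lambda)-\lambda\phi'(\lambda)$ for $\lambda>0$. If $H$ varies regularly at $0$ (at $\infty$, respectively) with index $\gamma\in[0,2)$, then \[ \mathbb{P}(T_t\ge r)\sim \frac{1}{\Gamma(2-\gamma)}\, t\,H(r^{-1}),\qquad r\to\infty\ (r\to 0,\text{ resp.})\ \text{ and }\ t\frac{\phi(r^{-1})^2}{H(r^{-1})}\to 0 . \]
   Context: A subordinator is a non-decreasing Lévy process; its Laplace exponent $\phi:(0,\infty)\to(0,\infty)$ has the form $\phi(\lambda)=b\lambda+\int_{(0,\infty)}(1-e^{-\lambda s})\mu(ds)$ with $b\ge0$ and $\int(1\wedge s)\mu(ds)<\infty$. A function $\ell:(0,\infty)\to(0,\infty)$ varies regularly at $\infty$ (at $0$) with index $\alpha$ if $\ell(\lambda s)/\ell(s)\to\lambda^\alpha$ as $s\to\infty$ ($s\to0$) for every $\lambda>0$. Notation: for functions $f,g,h$ of $(t,r)\in(0,\infty)^2$, "$f(t,r)\sim g(t,r)$, $r\to a$ and $h(t,r)\to 0$" means $\lim f(t,r)/g(t,r)=1$ where the limit is taken jointly as $r\to a$ and $h(t,r)\to0$ (i.e. for every $\varepsilon>0$ there is a neighbourhood $U$ of $a$ and $\delta>0$ such that $|f/g-1|<\varepsilon$ whenever $r\in U$ and $h(t,r)<\delta$). *)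

theory Defs
  imports "HOL-Probability.Probability"
begin

definition indep_increments :: "'a measure \<Rightarrow> (real \<Rightarrow> 'a \<Rightarrow> real) \<Rightarrow> bool" where
  "indep_increments M T \<longleftrightarrow>
     (\<forall>ts::real list. sorted ts \<and> (\<forall>x\<in>set ts. 0 \<le> x) \<longrightarrow>
        prob_space.indep_vars M (\<lambda>_. borel)
          (\<lambda>i \<omega>. T (ts ! Suc i) \<omega> - T (ts ! i) \<omega>) {..<length ts - 1})"

definition stationary_increments :: "'a measure \<Rightarrow> (real \<Rightarrow> 'a \<Rightarrow> real) \<Rightarrow> bool" where
  "stationary_increments M T \<longleftrightarrow>
     (\<forall>s t. 0 \<le> s \<longrightarrow> 0 \<le> t \<longrightarrow>
        distr M borel (\<lambda>\<omega>. T (s + t) \<omega> - T s \<omega>) = distr M borel (T t))"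

definition subordinator :: "'a measure \<Rightarrow> (real \<Rightarrow> 'a \<Rightarrow> real) \<Rightarrow> bool" where
  "subordinator M T \<longleftrightarrow>
     prob_space M \<and>
     (\<forall>t\<ge>0. T t \<in> borel_measurable M) \<and>
     (\<forall>\<omega>\<in>space M. T 0 \<omega> = 0 \<and> mono_on {0..} (\<lambda>t. T t \<omega>) \<and>
        (\<forall>t\<ge>0. continuous (at_right t) (\<lambda>t. T t \<omega>))) \<and>
     indep_increments M T \<and> stationary_increments M T"

definition laplace_exponent :: "'a measure \<Rightarrow> (real \<Rightarrow> 'a \<Rightarrow> real) \<Rightarrow> (real \<Rightarrow> real) \<Rightarrow> bool" where
  "laplace_exponent M T \<phi> \<longleftrightarrow>
     (\<forall>t\<ge>0. \<forall>l>0. (\<integral>\<omega>. exp (- l * T t \<omega>) \<partial>M) = exp (- t * \<phi> l))"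

definition regularly_varying :: "real filter \<Rightarrow> (real \<Rightarrow> real) \<Rightarrow> real \<Rightarrow> bool" where
  "regularly_varying F L \<alpha> \<longleftrightarrow>
     (\<forall>s>0. L s > 0) \<and>
     (\<forall>c>0. ((\<lambda>s. L (c * s) / L s) \<longlongrightarrow> c powr \<alpha>) F)"

text \<open>f(t,r) \<sim> g(t,r) jointly as r \<rightarrow> a (along F) and h(t,r) \<rightarrow> 0, with t,r \<in> (0,\<infinity>):
for every eps > 0 there are a neighbourhood of a (an eventually-set of F) and
delta > 0 such that |f/g - 1| < eps whenever r lies in it and |h(t,r)| < delta.\<close>

definition joint_asymp ::
  "real filter \<Rightarrow> (real \<Rightarrow> real \<Rightarrow> real) \<Rightarrow> (real \<Rightarrow> real \<Rightarrow> real) \<Rightarrow> (real \<Rightarrow> real \<Rightarrow> real) \<Rightarrow> bool" where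
  "joint_asymp F f g h \<longleftrightarrow>
     (\<forall>\<epsilon>>0. \<exists>\<delta>>0. \<forall>\<^sub>F r in F. \<forall>t>0. r > 0 \<longrightarrow> \<bar>h t r\<bar> < \<delta> \<longrightarrow>
        \<bar>f t r / g t r - 1\<bar> < \<epsilon>)"

end

theory Submission
  imports Defs
begin

definition kf :: "real \<Rightarrow> real" where "kf u = 1 - (1 + u) * exp (- u)"

lemma kf_deriv:
  assumes "c \<noteq> 0"
  shows "((\<lambda>x. kf (c*x) / c^2) has_real_derivative x * exp (-(c*x))) (at x)"
proof -
  have "((\<lambda>x. 1 - (1 + c*x) * exp (-(c*x))) has_real_derivative c^2 * (x * exp (-(c*x)))) (at x)"
    by (rule derivative_eq_intros refl)+ (simp add: algebra_simps power2_eq_square)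
  from DERIV_cdivide[OF this, of "c^2"] show ?thesis using assms by (simp add: kf_def)
qed

lemma kf_nonneg: "0 \<le> u \<Longrightarrow> 0 \<le> kf u"
proof -
  assume "0 \<le> u"
  have "(1 + u) * exp (-u) \<le> 1"
    using exp_ge_add_one_self[of u] by (simp add: exp_minus field_simps)
  thus ?thesis by (simp add: kf_def)
qed

lemma kf_le1: "0 \<le> u \<Longrightarrow> kf u \<le> 1"
  by (simp add: kf_def)

lemma exp_taylor2: "\<bar>exp x - 1 - x\<bar> \<le> exp \<bar>x\<bar> * x^2 / 2" for x :: real
proof -
  obtain t where t: "\<bar>t\<bar> \<le> \<bar>x\<bar>" "exp x = (\<Sum>m<2. x ^ m / fact m) + exp t / fact 2 * x ^ 2"
    using Maclaurin_exp_le[of x 2] by blast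
  have e: "exp x - 1 - x = exp t / 2 * x^2" using t(2) by (simp add: numeral_2_eq_2)
  have "exp t \<le> exp \<bar>x\<bar>" using t(1) by simp
  have "\<bar>exp x - 1 - x\<bar> = exp t / 2 * x^2" unfolding e by (simp add: abs_of_nonneg)
  also have "\<dots> \<le> exp \<bar>x\<bar> / 2 * x^2" using \<open>exp t \<le> exp \<bar>x\<bar>\<close> by (intro mult_right_mono) auto
  finally show ?thesis by simp
qed

definition tz :: "real \<Rightarrow> real \<Rightarrow> real \<Rightarrow> real \<Rightarrow> real" where
  "tz \<alpha> \<beta> \<theta> s = max 0 (min 1 (min ((s - \<alpha>)/\<theta> + 1) ((\<beta> - s)/\<theta> + 1)))"

lemma tz_cont: "\<theta> > 0 \<Longrightarrow> continuous_on UNIV (tz \<alpha> \<beta> \<theta>)"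
  unfolding tz_def by (intro continuous_intros) auto

lemma tz_bounds: "0 \<le> tz \<alpha> \<beta> \<theta> s" "tz \<alpha> \<beta> \<theta> s \<le> 1"
  by (auto simp: tz_def)

lemma tz_one: "\<theta> > 0 \<Longrightarrow> \<alpha> \<le> s \<Longrightarrow> s \<le> \<beta> \<Longrightarrow> tz \<alpha> \<beta> \<theta> s = 1"
  by (auto simp: tz_def field_simps)

lemma tz_zero: "\<theta> > 0 \<Longrightarrow> s \<le> \<alpha> - \<theta> \<or> s \<ge> \<beta> + \<theta> \<Longrightarrow> tz \<alpha> \<beta> \<theta> s = 0"
proof -
  assume th: "\<theta> > 0" and s: "s \<le> \<alpha> - \<theta> \<or> s \<ge> \<beta> + \<theta>"
  have "(s - \<alpha>)/\<theta> + 1 \<le> 0 \<or> (\<beta> - s)/\<theta> + 1 \<le> 0"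
    using s th by (auto simp: field_simps)
  thus ?thesis by (auto simp: tz_def)
qed

lemma exp_poly_approx:
  fixes u :: "real \<Rightarrow> real"
  assumes cont: "continuous_on UNIV u" and vanish: "\<And>s. s \<ge> 3 \<Longrightarrow> u s = 0" and eta: "\<eta> > 0"
  obtains p :: "nat \<Rightarrow> real" and m where
    "\<And>s. s \<ge> 0 \<Longrightarrow> \<bar>(\<Sum>i\<le>m. p i * exp (- ((real i + 1) * s))) - u s\<bar> \<le> \<eta> * exp (- s)"
proof -
  define c0 :: real where "c0 = exp (-3)"
  have c0: "c0 > 0" by (simp add: c0_def)
  define f where "f y = u (- ln (max y c0)) / max y c0" for y
  have "continuous_on {0..1} f"
    unfolding f_def
    by (intro continuous_intros continuous_on_compose2[OF cont]) (use c0 in auto)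
  from Stone_Weierstrass_real_polynomial_function[OF _ this eta]
  obtain g where g: "real_polynomial_function g" "\<And>y. y \<in> {0..1} \<Longrightarrow> \<bar>f y - g y\<bar> < \<eta>"
    by auto
  from real_polynomial_function_imp_sum[OF g(1)] obtain a n where
    gdef: "g = (\<lambda>x. \<Sum>i\<le>n. a i * x ^ i)" by auto
  show ?thesis
  proof (rule that[of a n])
    fix s :: real assume s: "s \<ge> 0"
    define y where "y = exp (- s)"
    have y01: "y \<in> {0..1}" using s by (auto simp: y_def)
    have fy: "y * f y = u s"
    proof (cases "s \<le> 3")
      case True
      then have "max y c0 = y" by (simp add: y_def c0_def)
      then show ?thesis by (simp add: f_def y_def)
    next
      case False
      then have "max y c0 = c0" by (simp add: y_def c0_def)
      then show ?thesis using vanish[of s] vanish[of 3] False by (simp add: f_def c0_def)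
    qed
    have sum_eq: "(\<Sum>i\<le>n. a i * exp (- ((real i + 1) * s))) = y * g y"
      unfolding gdef y_def sum_distrib_left
    proof (rule sum.cong[OF refl])
      fix i assume "i \<in> {..n}"
      have "exp (- ((real i + 1) * s)) = exp (-s) * exp (- s) ^ i"
        by (simp add: exp_of_nat_mult[symmetric] exp_add[symmetric] algebra_simps flip: exp_of_nat_mult)
      then show "a i * exp (- ((real i + 1) * s)) = exp (- s) * (a i * exp (- s) ^ i)" by simp
    qed
    have "y * g y - y * f y = y * (g y - f y)" by (simp add: algebra_simps)
    then have "\<bar>y * g y - y * f y\<bar> = y * \<bar>f y - g y\<bar>" using y01 by (simp add: abs_mult abs_minus_commute)
    also have "\<dots> \<le> y * \<eta>" using g(2)[OF y01] y01 by (intro mult_left_mono) auto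
    finally show "\<bar>(\<Sum>i\<le>n. a i * exp (- ((real i + 1) * s))) - u s\<bar> \<le> \<eta> * exp (- s)"
      using sum_eq fy by (simp add: y_def mult.commute)
  qed
qed

lemma gamma_scaled:
  fixes a c :: real
  assumes a: "a > 0" and c: "c > 0"
  shows "((\<lambda>s. s powr (a-1) * exp (-(c * s))) has_integral (Gamma a * c powr (-a))) {0..}"
proof -
  define f where "f t = indicator {0..} t * t powr (a - 1) / exp t" for t :: real
  have fm: "f \<in> borel_measurable borel" unfolding f_def by measurable
  have G: "ennreal (Gamma a) = (\<integral>\<^sup>+t. ennreal (f t) \<partial>lborel)"
    using Gamma_conv_nn_integral_real[OF a] unfolding f_def by simp
  also have "\<dots> = ennreal \<bar>c\<bar> * (\<integral>\<^sup>+x. ennreal (f (0 + c * x)) \<partial>lborel)"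
    by (rule nn_integral_real_affine) (use fm c in auto)
  finally have G1: "ennreal (Gamma a) = ennreal c * (\<integral>\<^sup>+x. ennreal (f (c * x)) \<partial>lborel)"
    using c by simp
  define g where "g x = indicator {0..} x * (x powr (a - 1) * exp (-(c * x)))" for x :: real
  have fg: "f (c * x) = c powr (a - 1) * g x" for x
  proof (cases "x \<ge> 0")
    case True
    then show ?thesis using c
      by (simp add: f_def g_def powr_mult exp_minus field_simps indicator_def zero_le_mult_iff)
  next
    case False
    then have "\<not> (0 \<le> c * x)" using c by (simp add: zero_le_mult_iff)
    then show ?thesis using False by (simp add: f_def g_def indicator_def)
  qed
  have gm: "g \<in> borel_measurable borel" unfolding g_def by measurable
  have gnn: "0 \<le> g x" for x by (simp add: g_def indicator_def)
  have "(\<integral>\<^sup>+x. ennreal (f (c * x)) \<partial>lborel) = ennreal (c powr (a-1)) * (\<integral>\<^sup>+x. ennreal (g x) \<partial>lborel)"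
    unfolding fg using gnn
    by (subst nn_integral_cmult[symmetric]) (use gm in \<open>auto simp: ennreal_mult\<close>)
  with G1 have G2: "ennreal (Gamma a) = ennreal (c * c powr (a-1)) * (\<integral>\<^sup>+x. ennreal (g x) \<partial>lborel)"
    using c by (simp add: ennreal_mult mult.assoc)
  have cpos: "c * c powr (a-1) > 0" using c by simp
  have Gpos: "Gamma a > 0" using a by (simp add: Gamma_real_pos)
  have "(\<integral>\<^sup>+x. ennreal (g x) \<partial>lborel) = ennreal (Gamma a / (c * c powr (a-1)))"
  proof -
    have "(\<integral>\<^sup>+x. ennreal (g x) \<partial>lborel) = ennreal (Gamma a) / ennreal (c * c powr (a-1))"
    proof -
      define E where "E = ennreal (c * c powr (a-1))"
      have e0: "E \<noteq> 0" "E \<noteq> top" using cpos by (auto simp: E_def)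
      have "(\<integral>\<^sup>+x. ennreal (g x) \<partial>lborel) = ((\<integral>\<^sup>+x. ennreal (g x) \<partial>lborel) * E) / E"
        using mult_divide_eq_ennreal[OF e0] by simp
      also have "\<dots> = ennreal (Gamma a) / E" using G2 by (simp add: E_def mult.commute)
      finally show ?thesis by (simp add: E_def)
    qed
    then show ?thesis using cpos Gpos by (simp add: divide_ennreal)
  qed
  moreover have "Gamma a / (c * c powr (a-1)) = Gamma a * c powr (-a)"
    using c by (simp add: powr_minus powr_add[symmetric] field_simps powr_diff)
  ultimately have "(g has_integral (Gamma a * c powr (-a))) UNIV"
    using gm gnn Gpos c by (intro nn_integral_has_integral) auto
  then have "((\<lambda>x. if x \<in> {0..} then x powr (a - 1) * exp (-(c * x)) else 0) has_integral (Gamma a * c powr (-a))) UNIV"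
    by (rule has_integral_cong[THEN iffD1, rotated]) (simp add: g_def indicator_def)
  then show ?thesis by (simp only: has_integral_restrict_UNIV)
qed

definition W :: "(nat \<Rightarrow> real) \<Rightarrow> nat \<Rightarrow> real \<Rightarrow> real" where
  "W p m s = (\<Sum>i\<le>m. p i * exp (- ((real i + 1) * s)))"

definition K :: "(nat \<Rightarrow> real) \<Rightarrow> nat \<Rightarrow> real \<Rightarrow> real" where
  "K p m x = (\<Sum>i\<le>m. p i * (kf ((real i + 1) * x) / (real i + 1)^2))"

lemma K_deriv: "(K p m has_real_derivative x * W p m x) (at x)"
proof -
  have "((\<lambda>x. \<Sum>i\<le>m. p i * (kf ((real i + 1) * x) / (real i + 1)^2)) has_real_derivative
        (\<Sum>i\<le>m. p i * (x * exp (- ((real i + 1) * x))))) (at x)"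
    by (intro DERIV_sum DERIV_cmult kf_deriv) auto
  then show ?thesis unfolding K_def[abs_def] W_def by (simp add: sum_distrib_left mult_ac)
qed

lemma K_ftc:
  assumes "a \<le> b"
  shows "((\<lambda>s. s * W p m s) has_integral (K p m b - K p m a)) {a..b}"
  by (rule fundamental_theorem_of_calculus[OF assms])
     (auto intro!: DERIV_subset[OF K_deriv] simp: has_real_derivative_iff_has_vector_derivative[symmetric])

lemma K_0: "K p m 0 = 0" by (simp add: K_def kf_def)

lemma W_Lambda:
  assumes "0 \<le> \<gamma>" "\<gamma> < 2"
  shows "((\<lambda>s. s powr (1 - \<gamma>) * W p m s) has_integral
           (\<Sum>i\<le>m. p i * (Gamma (2 - \<gamma>) * (real i + 1) powr (\<gamma> - 2)))) {0..}"
proof -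
  have "((\<lambda>s. \<Sum>i\<le>m. p i * (s powr (1 - \<gamma>) * exp (- ((real i + 1) * s)))) has_integral
           (\<Sum>i\<le>m. p i * (Gamma (2 - \<gamma>) * (real i + 1) powr (\<gamma> - 2)))) {0..}"
  proof (intro has_integral_sum ballI finite_atMost has_integral_mult_right)
    fix i assume "i \<in> {..m}"
    have "((\<lambda>s. s powr ((2 - \<gamma>) - 1) * exp (- ((real i + 1) * s))) has_integral
            (Gamma (2 - \<gamma>) * (real i + 1) powr (- (2 - \<gamma>)))) {0..}"
      using gamma_scaled[of "2 - \<gamma>" "real i + 1"] assms by simp
    then show "((\<lambda>s. s powr (1 - \<gamma>) * exp (- ((real i + 1) * s))) has_integral
            (Gamma (2 - \<gamma>) * (real i + 1) powr (\<gamma> - 2))) {0..}" by simp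
  qed
  then show ?thesis unfolding W_def by (simp add: sum_distrib_left mult_ac)
qed

lemma powr_between:
  fixes \<alpha> s \<beta> e :: real
  assumes "0 < \<alpha>" "\<alpha> \<le> s" "s \<le> \<beta>"
  shows "min (\<alpha> powr e) (\<beta> powr e) \<le> s powr e \<and> s powr e \<le> max (\<alpha> powr e) (\<beta> powr e)"
proof (cases "e \<ge> 0")
  case True
  have "\<alpha> powr e \<le> s powr e" by (rule powr_mono2) (use assms True in auto)
  moreover have "s powr e \<le> \<beta> powr e" by (rule powr_mono2) (use assms True in auto)
  ultimately show ?thesis by auto
next
  case False
  have "s powr e \<le> \<alpha> powr e" by (rule powr_mono2') (use assms False in auto)
  moreover have "\<beta> powr e \<le> s powr e" by (rule powr_mono2') (use assms False in auto)
  ultimately show ?thesis by auto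
qed

lemma hi_const: "a \<le> b \<Longrightarrow> ((\<lambda>x. c) has_integral (b - a) * c) {a..b}" for a b c :: real
  using has_integral_const_real[of c a b] by simp

lemma tauber_upper:
  fixes \<gamma> \<epsilon> :: real
  assumes \<gamma>: "0 \<le> \<gamma>" "\<gamma> < 2" and \<epsilon>: "\<epsilon> > 0"
  obtains p m A where "A > 0"
    "\<And>x. x \<ge> 0 \<Longrightarrow> A * (if 1 \<le> x then 1 else 0) \<le> K p m x"
    "(\<Sum>i\<le>m. p i * (real i + 1) powr (\<gamma> - 2)) \<le> A * (1 / Gamma (2 - \<gamma>) + \<epsilon>)"
proof -
  define G where "G = Gamma (2 - \<gamma>)"
  have G: "G > 0" using \<gamma> by (simp add: G_def Gamma_real_pos)
  define e where "e = 1 - \<gamma>"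
  define Q where "Q \<delta> = max ((1 - \<delta> - \<delta>^2) powr e) ((1 + \<delta>^2) powr e)" for \<delta> :: real
  define R where "R \<delta> = Q \<delta> * (1 + 2 * \<delta>) / (1 - \<delta>)" for \<delta> :: real
  have lim: "(R \<longlongrightarrow> 1) (at 0)"
  proof -
    have "(R \<longlongrightarrow> max ((1 - 0 - 0^2) powr e) ((1 + 0^2) powr e) * (1 + 2 * 0) / (1 - 0)) (at 0)"
      unfolding R_def Q_def by (intro tendsto_intros) auto
    then show ?thesis by simp
  qed
  have "\<forall>\<^sub>F \<delta> in at_right 0. R \<delta> < 1 + \<epsilon> * G / 2"
    using order_tendstoD(2)[OF tendsto_within_subset[OF lim, of "{0<..}"]] G \<epsilon> by auto
  then obtain b where b: "b > 0" "\<And>y. 0 < y \<Longrightarrow> y < b \<Longrightarrow> R y < 1 + \<epsilon> * G / 2"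
    unfolding eventually_at_right_field by auto
  define \<delta> where "\<delta> = min (b/2) (1/8)"
  have \<delta>: "0 < \<delta>" "\<delta> \<le> 1/8" "R \<delta> < 1 + \<epsilon> * G / 2" using b by (auto simp: \<delta>_def)
  define \<theta> where "\<theta> = \<delta>^2"
  have \<theta>: "\<theta> > 0" "\<theta> \<le> \<delta>" using \<delta> by (auto simp: \<theta>_def power2_eq_square mult_le_cancel_left1)
  define a where "a = 1 - \<delta>"
  define u where "u = tz a 1 \<theta>"
  define \<alpha> where "\<alpha> = a - \<theta>"
  define \<beta> where "\<beta> = 1 + \<theta>"
  have \<alpha>: "\<alpha> > 0" "\<alpha> \<le> \<beta>" using \<delta> \<theta> by (auto simp: \<alpha>_def \<beta>_def a_def)
  define \<eta> where "\<eta> = \<delta> * (1 - \<delta>) * \<epsilon> / 4"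
  have \<eta>: "\<eta> > 0" using \<delta> \<epsilon> by (auto simp: \<eta>_def)
  have ucont: "continuous_on UNIV u" unfolding u_def by (rule tz_cont) (use \<theta> in auto)
  have uvan: "u s = 0" if "s \<ge> 3" for s
    unfolding u_def by (rule tz_zero) (use \<theta> \<delta> that in auto)
  obtain p0 m where p0: "\<And>s. s \<ge> 0 \<Longrightarrow> \<bar>(\<Sum>i\<le>m. p0 i * exp (- ((real i + 1) * s))) - u s\<bar> \<le> \<eta> * exp (- s)"
    using exp_poly_approx[OF ucont uvan \<eta>] by metis
  define p where "p i = p0 i + (if i = 0 then \<eta> else 0)" for i
  have Wp: "W p m s = W p0 m s + \<eta> * exp (- s)" for s
  proof -
    have "W p m s = W p0 m s + (\<Sum>i\<le>m. (if i = 0 then \<eta> * exp (- ((real i + 1) * s)) else 0))"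
    proof -
      have "p i * exp (- ((real i + 1) * s)) = p0 i * exp (- ((real i + 1) * s)) + (if i = 0 then \<eta> * exp (- ((real i + 1) * s)) else 0)" for i
        by (simp add: p_def distrib_right)
      then show ?thesis unfolding W_def by (simp only: sum.distrib)
    qed
    also have "(\<Sum>i\<le>m. (if i = 0 then \<eta> * exp (- ((real i + 1) * s)) else 0)) = \<eta> * exp (- s)"
      by (subst sum.delta) auto
    finally show ?thesis .
  qed
  have Wb: "u s \<le> W p m s \<and> W p m s \<le> u s + 2 * \<eta> * exp (- s)" if "s \<ge> 0" for s
    using p0[OF that] Wp[of s] unfolding W_def by (auto simp: abs_le_iff)
  have u01: "0 \<le> u s" "u s \<le> 1" for s unfolding u_def by (rule tz_bounds)+
  define A where "A = \<delta> * (1 - \<delta>)"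
  have A: "A > 0" using \<delta> by (auto simp: A_def)
  have nn: "0 \<le> s * W p m s" if "s \<in> {a..b}" "0 \<le> a" for s a b
    using Wb[of s] u01[of s] that by auto
  have Kx: "A * (if 1 \<le> x then 1 else 0) \<le> K p m x" if x: "x \<ge> 0" for x
  proof (cases "1 \<le> x")
    case False
    have "0 \<le> K p m x - K p m 0"
      by (rule has_integral_nonneg[OF K_ftc[OF x]]) (rule nn, auto)
    then show ?thesis using False by (simp add: K_0)
  next
    case True
    have a01: "0 \<le> a" "a \<le> 1" using \<delta> by (auto simp: a_def)
    have I1: "0 \<le> K p m a - K p m 0"
      by (rule has_integral_nonneg[OF K_ftc[OF a01(1)]]) (rule nn, auto)
    have I3: "0 \<le> K p m x - K p m 1"
      by (rule has_integral_nonneg[OF K_ftc[OF True]]) (rule nn, auto)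
    have I2: "(1 - a) * a \<le> K p m 1 - K p m a"
    proof (rule has_integral_le[OF hi_const[OF a01(2)] K_ftc[OF a01(2)]])
      fix s assume s: "s \<in> {a..1}"
      have "u s = 1" unfolding u_def by (rule tz_one) (use \<theta> s in auto)
      then have "1 \<le> W p m s" using Wb[of s] s a01 by auto
      then show "a \<le> s * W p m s" using s a01 by (auto intro: mult_mono[of a s 1, simplified])
    qed
    have "A = (1 - a) * a" using a01 by (simp add: A_def a_def)
    then show ?thesis using I1 I2 I3 True by (simp add: K_0)
  qed
  define S where "S = (\<Sum>i\<le>m. p i * (real i + 1) powr (\<gamma> - 2))"
  have L: "((\<lambda>s. s powr (1 - \<gamma>) * W p m s) has_integral S * G) {0..}"
  proof -
    have "(\<Sum>i\<le>m. p i * (Gamma (2 - \<gamma>) * (real i + 1) powr (\<gamma> - 2))) = S * G"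
      unfolding S_def G_def sum_distrib_right by (rule sum.cong) (auto simp: mult_ac)
    then show ?thesis using W_Lambda[OF \<gamma>, of p m] by simp
  qed
  have g1: "((\<lambda>s. s powr (1 - \<gamma>) * exp (- s)) has_integral G) {0..}"
    using gamma_scaled[of "2 - \<gamma>" 1] \<gamma> by (simp add: G_def)
  have h: "((\<lambda>s. (if s \<in> {\<alpha>..\<beta>} then Q \<delta> else 0) + 2 * \<eta> * (s powr (1 - \<gamma>) * exp (- s)))
           has_integral ((\<beta> - \<alpha>) * Q \<delta> + 2 * \<eta> * G)) {0..}"
  proof (rule has_integral_add)
    show "((\<lambda>s. if s \<in> {\<alpha>..\<beta>} then Q \<delta> else 0) has_integral (\<beta> - \<alpha>) * Q \<delta>) {0..}"
      using \<alpha> by (subst has_integral_restrict) (auto intro: hi_const)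
    show "((\<lambda>s. 2 * \<eta> * (s powr (1 - \<gamma>) * exp (- s))) has_integral 2 * \<eta> * G) {0..}"
      by (rule has_integral_mult_right[OF g1])
  qed
  have "S * G \<le> (\<beta> - \<alpha>) * Q \<delta> + 2 * \<eta> * G"
  proof (rule has_integral_le[OF L h])
    fix s :: real assume s: "s \<in> {0..}"
    have pw: "0 \<le> s powr (1 - \<gamma>)" by simp
    have "s powr (1 - \<gamma>) * W p m s \<le> s powr (1 - \<gamma>) * (u s + 2 * \<eta> * exp (- s))"
      using Wb[of s] s pw by (intro mult_left_mono) auto
    also have "\<dots> = s powr (1 - \<gamma>) * u s + 2 * \<eta> * (s powr (1 - \<gamma>) * exp (- s))"
      by (simp add: algebra_simps)
    also have "s powr (1 - \<gamma>) * u s \<le> (if s \<in> {\<alpha>..\<beta>} then Q \<delta> else 0)"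
    proof (cases "s \<in> {\<alpha>..\<beta>}")
      case True
      have "s powr (1 - \<gamma>) \<le> Q \<delta>"
        using powr_between[of \<alpha> s \<beta> e] True \<alpha>
        by (simp add: Q_def e_def \<alpha>_def \<beta>_def a_def \<theta>_def)
      then have "s powr (1 - \<gamma>) * u s \<le> Q \<delta> * 1"
        using u01[of s] pw by (intro mult_mono) (auto intro: order_trans[OF pw])
      then show ?thesis using True by simp
    next
      case False
      have "u s = 0" unfolding u_def by (rule tz_zero) (use \<theta> False in \<open>auto simp: \<alpha>_def \<beta>_def\<close>)
      then show ?thesis using False by auto
    qed
    finally show "s powr (1 - \<gamma>) * W p m s \<le> (if s \<in> {\<alpha>..\<beta>} then Q \<delta> else 0) + 2 * \<eta> * (s powr (1 - \<gamma>) * exp (- s))"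
      by simp
  qed
  also have "(\<beta> - \<alpha>) * Q \<delta> = A * R \<delta>"
    using \<alpha> \<delta> by (simp add: A_def R_def \<alpha>_def \<beta>_def a_def \<theta>_def power2_eq_square field_simps)
  finally have SG: "S * G \<le> A * R \<delta> + 2 * \<eta> * G" .
  have "A * R \<delta> \<le> A * (1 + \<epsilon> * G / 2)" using \<delta>(3) A by (intro mult_left_mono) auto
  moreover have "2 * \<eta> * G = A * (\<epsilon> * G / 2)" by (simp add: \<eta>_def A_def)
  ultimately have "S * G \<le> A * (1 + \<epsilon> * G / 2) + A * (\<epsilon> * G / 2)" using SG by linarith
  also have "\<dots> = A * (1 + \<epsilon> * G)" by (simp add: algebra_simps)
  finally have "S * G \<le> A * (1 + \<epsilon> * G)" .
  then have "S \<le> A * (1 / G + \<epsilon>)" using G by (simp add: field_simps)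
  then show ?thesis using that[OF A Kx] unfolding S_def G_def by blast
qed

lemma tauber_lower:
  fixes \<gamma> \<epsilon> :: real
  assumes \<gamma>: "0 \<le> \<gamma>" "\<gamma> < 2" and \<epsilon>: "\<epsilon> > 0"
  obtains p m B where "B > 0"
    "\<And>x. x \<ge> 0 \<Longrightarrow> K p m x \<le> B * (if 1 \<le> x then 1 else 0)"
    "B * (1 / Gamma (2 - \<gamma>) - \<epsilon>) \<le> (\<Sum>i\<le>m. p i * (real i + 1) powr (\<gamma> - 2))"
proof -
  define G where "G = Gamma (2 - \<gamma>)"
  have G: "G > 0" using \<gamma> by (simp add: G_def Gamma_real_pos)
  define e where "e = 1 - \<gamma>"
  define Q where "Q \<delta> = min ((1 + \<delta>^2) powr e) ((1 + \<delta> - \<delta>^2) powr e)" for \<delta> :: real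
  define R where "R \<delta> = Q \<delta> * (1 - 2 * \<delta>) / (1 + \<delta>)" for \<delta> :: real
  have lim: "(R \<longlongrightarrow> 1) (at 0)"
  proof -
    have "(R \<longlongrightarrow> min ((1 + 0^2) powr e) ((1 + 0 - 0^2) powr e) * (1 - 2 * 0) / (1 + 0)) (at 0)"
      unfolding R_def Q_def by (intro tendsto_intros) auto
    then show ?thesis by simp
  qed
  have "\<forall>\<^sub>F \<delta> in at_right 0. R \<delta> > 1 - \<epsilon> * G / 2"
    using order_tendstoD(1)[OF tendsto_within_subset[OF lim, of "{0<..}"]] G \<epsilon> by auto
  then obtain b where b: "b > 0" "\<And>y. 0 < y \<Longrightarrow> y < b \<Longrightarrow> R y > 1 - \<epsilon> * G / 2"
    unfolding eventually_at_right_field by auto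
  define \<delta> where "\<delta> = min (b/2) (1/8)"
  have \<delta>: "0 < \<delta>" "\<delta> \<le> 1/8" "R \<delta> > 1 - \<epsilon> * G / 2" using b by (auto simp: \<delta>_def)
  define \<theta> where "\<theta> = \<delta>^2"
  have \<theta>: "\<theta> > 0" "2 * \<theta> \<le> \<delta>" using \<delta> by (auto simp: \<theta>_def power2_eq_square)
  define \<alpha> where "\<alpha> = 1 + \<theta>"
  define \<beta> where "\<beta> = 1 + \<delta> - \<theta>"
  define u where "u = tz \<alpha> \<beta> \<theta>"
  have \<alpha>: "\<alpha> > 0" "\<alpha> \<le> \<beta>" using \<delta> \<theta> by (auto simp: \<alpha>_def \<beta>_def)
  define \<eta> where "\<eta> = \<delta> * (1 + \<delta>) * \<epsilon> / 4"
  have \<eta>: "\<eta> > 0" using \<delta> \<epsilon> by (auto simp: \<eta>_def)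
  have ucont: "continuous_on UNIV u" unfolding u_def by (rule tz_cont) (use \<theta> in auto)
  have uzero: "u s = 0" if "s \<le> 1 \<or> s \<ge> 1 + \<delta>" for s
    unfolding u_def by (rule tz_zero) (use \<theta> that in \<open>auto simp: \<alpha>_def \<beta>_def\<close>)
  have uvan: "u s = 0" if "s \<ge> 3" for s using uzero[of s] that \<delta> by auto
  obtain p0 m where p0: "\<And>s. s \<ge> 0 \<Longrightarrow> \<bar>(\<Sum>i\<le>m. p0 i * exp (- ((real i + 1) * s))) - u s\<bar> \<le> \<eta> * exp (- s)"
    using exp_poly_approx[OF ucont uvan \<eta>] by metis
  define p where "p i = p0 i + (if i = 0 then - \<eta> else 0)" for i
  have Wp: "W p m s = W p0 m s - \<eta> * exp (- s)" for s
  proof -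
    have "W p m s = W p0 m s + (\<Sum>i\<le>m. (if i = 0 then - \<eta> * exp (- ((real i + 1) * s)) else 0))"
    proof -
      have "p i * exp (- ((real i + 1) * s)) = p0 i * exp (- ((real i + 1) * s)) + (if i = 0 then - \<eta> * exp (- ((real i + 1) * s)) else 0)" for i
        by (simp add: p_def distrib_right)
      then show ?thesis unfolding W_def by (simp only: sum.distrib)
    qed
    also have "(\<Sum>i\<le>m. (if i = 0 then - \<eta> * exp (- ((real i + 1) * s)) else 0)) = - \<eta> * exp (- s)"
      by (subst sum.delta) auto
    finally show ?thesis by simp
  qed
  have Wb: "u s - 2 * \<eta> * exp (- s) \<le> W p m s \<and> W p m s \<le> u s" if "s \<ge> 0" for s
    using p0[OF that] Wp[of s] unfolding W_def by (auto simp: abs_le_iff)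
  have u01: "0 \<le> u s" "u s \<le> 1" for s unfolding u_def by (rule tz_bounds)+
  define B where "B = \<delta> * (1 + \<delta>)"
  have B: "B > 0" using \<delta> by (auto simp: B_def)
  have np: "s * W p m s \<le> 0" if "s \<ge> 0" "s \<le> 1 \<or> s \<ge> 1 + \<delta>" for s
    using Wb[of s] uzero[OF that(2)] that(1) by (auto simp: mult_nonneg_nonpos)
  have Kneg: "K p m y \<le> 0" if "0 \<le> y" "y \<le> 1" for y
  proof -
    have "K p m y - K p m 0 \<le> 0"
      by (rule has_integral_le[OF K_ftc[OF that(1)] has_integral_0]) (rule np, use that in auto)
    then show ?thesis by (simp add: K_0)
  qed
  have Kmid: "K p m y - K p m 1 \<le> (y - 1) * (1 + \<delta>)" if "1 \<le> y" "y \<le> 1 + \<delta>" for y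
  proof (rule has_integral_le[OF K_ftc[OF that(1)] hi_const[OF that(1)]])
    fix s assume s: "s \<in> {1..y}"
    have "s * W p m s \<le> s * u s" using Wb[of s] s by (intro mult_left_mono) auto
    also have "\<dots> \<le> s * 1" using u01[of s] s by (intro mult_left_mono) auto
    also have "\<dots> \<le> 1 + \<delta>" using s that by auto
    finally show "s * W p m s \<le> 1 + \<delta>" .
  qed
  have Kx: "K p m x \<le> B * (if 1 \<le> x then 1 else 0)" if x: "x \<ge> 0" for x
  proof (cases "1 \<le> x")
    case False
    then show ?thesis using Kneg[of x] x by simp
  next
    case True
    have K1: "K p m 1 \<le> 0" using Kneg[of 1] by simp
    show ?thesis
    proof (cases "x \<le> 1 + \<delta>")
      case True2: True
      have "(x - 1) * (1 + \<delta>) \<le> \<delta> * (1 + \<delta>)" using True2 \<delta> by (intro mult_right_mono) auto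
      then show ?thesis using Kmid[OF True True2] K1 True by (simp add: B_def)
    next
      case False
      have M: "K p m (1 + \<delta>) - K p m 1 \<le> \<delta> * (1 + \<delta>)" using Kmid[of "1 + \<delta>"] \<delta> by simp
      have "K p m x - K p m (1 + \<delta>) \<le> 0"
        by (rule has_integral_le[OF K_ftc has_integral_0]) (use False \<delta> in \<open>auto intro!: np\<close>)
      then show ?thesis using M K1 True by (simp add: B_def)
    qed
  qed
  define S where "S = (\<Sum>i\<le>m. p i * (real i + 1) powr (\<gamma> - 2))"
  have L: "((\<lambda>s. s powr (1 - \<gamma>) * W p m s) has_integral S * G) {0..}"
  proof -
    have "(\<Sum>i\<le>m. p i * (Gamma (2 - \<gamma>) * (real i + 1) powr (\<gamma> - 2))) = S * G"
      unfolding S_def G_def sum_distrib_right by (rule sum.cong) (auto simp: mult_ac)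
    then show ?thesis using W_Lambda[OF \<gamma>, of p m] by simp
  qed
  have g1: "((\<lambda>s. s powr (1 - \<gamma>) * exp (- s)) has_integral G) {0..}"
    using gamma_scaled[of "2 - \<gamma>" 1] \<gamma> by (simp add: G_def)
  have h: "((\<lambda>s. (if s \<in> {\<alpha>..\<beta>} then Q \<delta> else 0) - 2 * \<eta> * (s powr (1 - \<gamma>) * exp (- s)))
           has_integral ((\<beta> - \<alpha>) * Q \<delta> - 2 * \<eta> * G)) {0..}"
  proof (rule has_integral_diff)
    show "((\<lambda>s. if s \<in> {\<alpha>..\<beta>} then Q \<delta> else 0) has_integral (\<beta> - \<alpha>) * Q \<delta>) {0..}"
      using \<alpha> by (subst has_integral_restrict) (auto intro: hi_const)
    show "((\<lambda>s. 2 * \<eta> * (s powr (1 - \<gamma>) * exp (- s))) has_integral 2 * \<eta> * G) {0..}"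
      by (rule has_integral_mult_right[OF g1])
  qed
  have "(\<beta> - \<alpha>) * Q \<delta> - 2 * \<eta> * G \<le> S * G"
  proof (rule has_integral_le[OF h L])
    fix s :: real assume s: "s \<in> {0..}"
    have pw: "0 \<le> s powr (1 - \<gamma>)" by simp
    have "(if s \<in> {\<alpha>..\<beta>} then Q \<delta> else 0) \<le> s powr (1 - \<gamma>) * u s"
    proof (cases "s \<in> {\<alpha>..\<beta>}")
      case True
      have "Q \<delta> \<le> s powr (1 - \<gamma>)"
        using powr_between[of \<alpha> s \<beta> e] True \<alpha>
        by (simp add: Q_def e_def \<alpha>_def \<beta>_def \<theta>_def)
      moreover have "u s = 1" unfolding u_def by (rule tz_one) (use \<theta> True in auto)
      ultimately show ?thesis using True by simp
    next
      case False
      then show ?thesis using u01[of s] pw by (subst if_not_P[OF False]) auto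
    qed
    then have "(if s \<in> {\<alpha>..\<beta>} then Q \<delta> else 0) - 2 * \<eta> * (s powr (1 - \<gamma>) * exp (- s))
        \<le> s powr (1 - \<gamma>) * (u s - 2 * \<eta> * exp (- s))" by (simp add: algebra_simps)
    also have "\<dots> \<le> s powr (1 - \<gamma>) * W p m s"
      using Wb[of s] s pw by (intro mult_left_mono) auto
    finally show "(if s \<in> {\<alpha>..\<beta>} then Q \<delta> else 0) - 2 * \<eta> * (s powr (1 - \<gamma>) * exp (- s)) \<le> s powr (1 - \<gamma>) * W p m s" .
  qed
  moreover have "(\<beta> - \<alpha>) * Q \<delta> = B * R \<delta>"
    using \<delta> by (simp add: B_def R_def \<alpha>_def \<beta>_def \<theta>_def power2_eq_square field_simps)
  ultimately have SG: "B * R \<delta> - 2 * \<eta> * G \<le> S * G" by simp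
  have "B * (1 - \<epsilon> * G / 2) \<le> B * R \<delta>" using \<delta>(3) B by (intro mult_left_mono) auto
  moreover have "2 * \<eta> * G = B * (\<epsilon> * G / 2)" by (simp add: \<eta>_def B_def)
  ultimately have "B * (1 - \<epsilon> * G / 2) - B * (\<epsilon> * G / 2) \<le> S * G" using SG by linarith
  moreover have "B * (1 - \<epsilon> * G / 2) - B * (\<epsilon> * G / 2) = B * (1 - \<epsilon> * G)" by (simp add: algebra_simps)
  ultimately have "B * (1 - \<epsilon> * G) \<le> S * G" by simp
  then have "B * (1 / G - \<epsilon>) \<le> S" using G by (simp add: field_simps)
  then show ?thesis using that[OF B Kx] unfolding S_def G_def by blast
qed

lemma K_conv: "K p m x = (\<Sum>i\<le>m. (p i / (real i + 1)^2) * kf ((real i + 1) * x))"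
  unfolding K_def by (simp add: field_simps)

lemma S_conv: "(\<Sum>i\<le>m. p i * (real i + 1) powr (\<gamma> - 2)) = (\<Sum>i\<le>m. (p i / (real i + 1)^2) * (real i + 1) powr \<gamma>)"
proof (rule sum.cong[OF refl])
  fix i assume "i \<in> {..m}"
  have "(real i + 1) powr (\<gamma> - 2) = (real i + 1) powr \<gamma> / (real i + 1) powr 2" by (simp add: powr_diff)
  also have "(real i + 1) powr 2 = (real i + 1)^2" by (simp add: powr_realpow)
  finally show "p i * (real i + 1) powr (\<gamma> - 2) = p i / (real i + 1)^2 * (real i + 1) powr \<gamma>" by simp
qed

lemma core:
  fixes F :: "real filter" and P Ek :: "real \<Rightarrow> real \<Rightarrow> real" and H \<phi> :: "real \<Rightarrow> real" and \<gamma> :: real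
  assumes \<gamma>: "0 \<le> \<gamma>" "\<gamma> < 2"
  and Hpos: "\<And>s. s > 0 \<Longrightarrow> H s > 0"
  and RV: "\<And>c. c > 0 \<Longrightarrow> ((\<lambda>r. H (c * (1/r)) / H (1/r)) \<longlongrightarrow> c powr \<gamma>) F"
  and F1: "\<And>t r A q m. t > 0 \<Longrightarrow> r > 0 \<Longrightarrow>
      (\<And>x. x \<ge> 0 \<Longrightarrow> A * (if 1 \<le> x then 1 else 0) \<le> (\<Sum>i\<le>m. q i * kf ((real i + 1) * x))) \<Longrightarrow>
      A * P t r \<le> (\<Sum>i\<le>m. q i * Ek t ((real i + 1) * (1/r)))"
  and F2: "\<And>t r B q m. t > 0 \<Longrightarrow> r > 0 \<Longrightarrow>
      (\<And>x. x \<ge> 0 \<Longrightarrow> (\<Sum>i\<le>m. q i * kf ((real i + 1) * x)) \<le> B * (if 1 \<le> x then 1 else 0)) \<Longrightarrow>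
      (\<Sum>i\<le>m. q i * Ek t ((real i + 1) * (1/r))) \<le> B * P t r"
  and F3: "\<And>t l. t > 0 \<Longrightarrow> l > 0 \<Longrightarrow> \<bar>Ek t l - t * H l\<bar> \<le> 2 * (t * \<phi> l)^2"
  and F4: "\<And>c l. c \<ge> 1 \<Longrightarrow> l > 0 \<Longrightarrow> 0 \<le> \<phi> (c * l) \<and> \<phi> (c * l) \<le> c * \<phi> l"
  shows "joint_asymp F P (\<lambda>t r. 1 / Gamma (2 - \<gamma>) * t * H (1 / r)) (\<lambda>t r. t * \<phi> (1 / r)^2 / H (1 / r))"
proof -
  define G where "G = Gamma (2 - \<gamma>)"
  have G: "G > 0" using \<gamma> by (simp add: G_def Gamma_real_pos)
  define hh where "hh t r = t * \<phi> (1 / r)^2 / H (1 / r)" for t r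
  define \<rho> where "\<rho> q m r = (\<Sum>i\<le>m. q i * (H ((real i + 1) * (1/r)) / H (1/r)))" for q :: "nat \<Rightarrow> real" and m r
  define C where "C q m = (\<Sum>i\<le>m. \<bar>q i\<bar> * (real i + 1)^2)" for q :: "nat \<Rightarrow> real" and m
  have C0: "C q m \<ge> 0" for q m unfolding C_def by (intro sum_nonneg) auto
  have est: "\<bar>(\<Sum>i\<le>m. q i * Ek t ((real i + 1) * (1/r))) / (t * H (1/r)) - \<rho> q m r\<bar> \<le> 2 * C q m * hh t r"
    if tr: "t > 0" "r > 0" for t r q m
  proof -
    have N: "t * H (1/r) > 0" using tr Hpos[of "1/r"] by simp
    have trm: "\<bar>q i * Ek t ((real i + 1) * (1/r)) - q i * (t * H ((real i + 1) * (1/r)))\<bar>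
        \<le> \<bar>q i\<bar> * (real i + 1)^2 * (2 * (t * \<phi> (1/r))^2)" for i
    proof -
      have l: "(real i + 1) * (1/r) > 0" using tr by simp
      have "\<bar>q i * Ek t ((real i + 1) * (1/r)) - q i * (t * H ((real i + 1) * (1/r)))\<bar>
          = \<bar>q i\<bar> * \<bar>Ek t ((real i + 1) * (1/r)) - t * H ((real i + 1) * (1/r))\<bar>"
        by (simp add: abs_mult flip: right_diff_distrib)
      also have "\<dots> \<le> \<bar>q i\<bar> * (2 * (t * \<phi> ((real i + 1) * (1/r)))^2)"
        by (intro mult_left_mono F3 tr l) auto
      also have "(t * \<phi> ((real i + 1) * (1/r)))^2 \<le> ((real i + 1) * (t * \<phi> (1/r)))^2"
      proof -
        have "0 \<le> \<phi> ((real i + 1) * (1/r))" "\<phi> ((real i + 1) * (1/r)) \<le> (real i + 1) * \<phi> (1/r)"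
          using F4[of "real i + 1" "1/r"] tr by auto
        then have "0 \<le> t * \<phi> ((real i + 1) * (1/r))" "t * \<phi> ((real i + 1) * (1/r)) \<le> (real i + 1) * (t * \<phi> (1/r))"
          using tr by (auto simp: mult_left_mono mult.left_commute)
        then show ?thesis by (intro power_mono) auto
      qed
      then have "\<bar>q i\<bar> * (2 * (t * \<phi> ((real i + 1) * (1/r)))^2) \<le> \<bar>q i\<bar> * (2 * ((real i + 1) * (t * \<phi> (1/r)))^2)"
        by (intro mult_left_mono) auto
      also have "\<dots> = \<bar>q i\<bar> * (real i + 1)^2 * (2 * (t * \<phi> (1/r))^2)"
        by (simp add: power_mult_distrib)
      finally show ?thesis .
    qed
    have "\<bar>(\<Sum>i\<le>m. q i * Ek t ((real i + 1) * (1/r))) - (\<Sum>i\<le>m. q i * (t * H ((real i + 1) * (1/r))))\<bar>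
        \<le> (\<Sum>i\<le>m. \<bar>q i\<bar> * (real i + 1)^2 * (2 * (t * \<phi> (1/r))^2))"
      unfolding sum_subtractf[symmetric] by (rule order_trans[OF sum_abs sum_mono[OF trm]])
    also have "\<dots> = C q m * (2 * (t * \<phi> (1/r))^2)" by (simp add: C_def sum_distrib_right)
    finally have E1: "\<bar>(\<Sum>i\<le>m. q i * Ek t ((real i + 1) * (1/r))) - (\<Sum>i\<le>m. q i * (t * H ((real i + 1) * (1/r))))\<bar>
        \<le> C q m * (2 * (t * \<phi> (1/r))^2)" .
    have E2: "(\<Sum>i\<le>m. q i * (t * H ((real i + 1) * (1/r)))) = (t * H (1/r)) * \<rho> q m r"
      unfolding \<rho>_def sum_distrib_left using N by (intro sum.cong) (auto simp: field_simps)
    have "\<bar>(\<Sum>i\<le>m. q i * Ek t ((real i + 1) * (1/r))) / (t * H (1/r)) - \<rho> q m r\<bar>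
        = \<bar>(\<Sum>i\<le>m. q i * Ek t ((real i + 1) * (1/r))) - (t * H (1/r)) * \<rho> q m r\<bar> / (t * H (1/r))"
    proof -
      have "(\<Sum>i\<le>m. q i * Ek t ((real i + 1) * (1/r))) / (t * H (1/r)) - \<rho> q m r
          = ((\<Sum>i\<le>m. q i * Ek t ((real i + 1) * (1/r))) - (t * H (1/r)) * \<rho> q m r) / (t * H (1/r))"
        using N tr Hpos[of "1/r"] by (simp add: diff_divide_distrib)
      then show ?thesis using N by (simp add: abs_divide)
    qed
    also have "\<dots> \<le> C q m * (2 * (t * \<phi> (1/r))^2) / (t * H (1/r))"
      using E1 E2 N by (intro divide_right_mono) auto
    also have "\<dots> = 2 * C q m * hh t r"
      using tr N by (simp add: hh_def power2_eq_square)
    finally show ?thesis .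
  qed
  have \<rho>lim: "((\<lambda>r. \<rho> q m r) \<longlongrightarrow> (\<Sum>i\<le>m. q i * (real i + 1) powr \<gamma>)) F" for q m
    unfolding \<rho>_def by (intro tendsto_sum tendsto_mult_left RV) auto
  show ?thesis unfolding joint_asymp_def
  proof (intro allI impI)
    fix \<epsilon>0 :: real assume \<epsilon>0: "\<epsilon>0 > 0"
    define \<epsilon> where "\<epsilon> = \<epsilon>0 / (3 * G)"
    have \<epsilon>: "\<epsilon> > 0" using \<epsilon>0 G by (simp add: \<epsilon>_def)
    obtain pU mU A where A: "A > 0"
      and AK: "\<And>x. x \<ge> 0 \<Longrightarrow> A * (if 1 \<le> x then 1 else 0) \<le> K pU mU x"
      and AS: "(\<Sum>i\<le>mU. pU i * (real i + 1) powr (\<gamma> - 2)) \<le> A * (1 / G + \<epsilon>)"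
      by (rule tauber_upper[OF \<gamma> \<epsilon>, folded G_def]) blast
    obtain pL mL B where B: "B > 0"
      and BK: "\<And>x. x \<ge> 0 \<Longrightarrow> K pL mL x \<le> B * (if 1 \<le> x then 1 else 0)"
      and BS: "B * (1 / G - \<epsilon>) \<le> (\<Sum>i\<le>mL. pL i * (real i + 1) powr (\<gamma> - 2))"
      by (rule tauber_lower[OF \<gamma> \<epsilon>, folded G_def]) blast
    define qU where "qU i = pU i / (real i + 1)^2" for i
    define qL where "qL i = pL i / (real i + 1)^2" for i
    define SU where "SU = (\<Sum>i\<le>mU. qU i * (real i + 1) powr \<gamma>)"
    define SL where "SL = (\<Sum>i\<le>mL. qL i * (real i + 1) powr \<gamma>)"
    have SU: "SU \<le> A * (1 / G + \<epsilon>)" using AS unfolding SU_def qU_def S_conv .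
    have SL: "B * (1 / G - \<epsilon>) \<le> SL" using BS unfolding SL_def qL_def S_conv .
    have evU: "\<forall>\<^sub>F r in F. \<rho> qU mU r < SU + A * \<epsilon>"
      using order_tendstoD(2)[OF \<rho>lim[of qU mU]] A \<epsilon> unfolding SU_def by auto
    have evL: "\<forall>\<^sub>F r in F. \<rho> qL mL r > SL - B * \<epsilon>"
      using order_tendstoD(1)[OF \<rho>lim[of qL mL]] B \<epsilon> unfolding SL_def by auto
    define \<delta> where "\<delta> = min (A * \<epsilon> / (2 * C qU mU + 1)) (B * \<epsilon> / (2 * C qL mL + 1))"
    have \<delta>: "\<delta> > 0" using A B \<epsilon> C0[of qU mU] C0[of qL mL] by (auto simp: \<delta>_def)
    have \<delta>U: "2 * C qU mU * \<delta> \<le> A * \<epsilon>"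
    proof -
      have "2 * C qU mU * \<delta> \<le> 2 * C qU mU * (A * \<epsilon> / (2 * C qU mU + 1))"
        using C0[of qU mU] by (intro mult_left_mono) (auto simp: \<delta>_def)
      also have "\<dots> \<le> A * \<epsilon>" using C0[of qU mU] A \<epsilon> by (simp add: field_simps)
      finally show ?thesis .
    qed
    have \<delta>L: "2 * C qL mL * \<delta> \<le> B * \<epsilon>"
    proof -
      have "2 * C qL mL * \<delta> \<le> 2 * C qL mL * (B * \<epsilon> / (2 * C qL mL + 1))"
        using C0[of qL mL] by (intro mult_left_mono) (auto simp: \<delta>_def)
      also have "\<dots> \<le> B * \<epsilon>" using C0[of qL mL] B \<epsilon> by (simp add: field_simps)
      finally show ?thesis .
    qed
    have "\<forall>\<^sub>F r in F. \<forall>t>0. r > 0 \<longrightarrow> \<bar>t * \<phi> (1 / r)^2 / H (1 / r)\<bar> < \<delta> \<longrightarrow>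
        \<bar>P t r / (1 / Gamma (2 - \<gamma>) * t * H (1 / r)) - 1\<bar> < \<epsilon>0"
    proof (rule eventually_mono[OF eventually_conj[OF evU evL]], intro allI impI)
      fix r t assume ev: "\<rho> qU mU r < SU + A * \<epsilon> \<and> SL - B * \<epsilon> < \<rho> qL mL r"
        and t: "t > 0" and r: "r > 0" and h: "\<bar>t * \<phi> (1 / r)^2 / H (1 / r)\<bar> < \<delta>"
      have N: "t * H (1/r) > 0" using t r Hpos[of "1/r"] by simp
      have h0: "0 \<le> hh t r" using t r Hpos[of "1/r"] by (simp add: hh_def)
      have hd: "hh t r < \<delta>" using h abs_ge_self[of "hh t r"] unfolding hh_def by linarith
      define Q where "Q = P t r / (t * H (1/r))"
      have up: "A * Q < A * (1 / G + 3 * \<epsilon>)"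
      proof -
        have "A * P t r \<le> (\<Sum>i\<le>mU. qU i * Ek t ((real i + 1) * (1/r)))"
          by (rule F1[OF t r]) (use AK in \<open>simp add: K_conv qU_def\<close>)
        then have "A * Q \<le> (\<Sum>i\<le>mU. qU i * Ek t ((real i + 1) * (1/r))) / (t * H (1/r))"
          using N by (simp add: Q_def divide_right_mono)
        also have "\<dots> \<le> \<rho> qU mU r + 2 * C qU mU * hh t r"
          using est[OF t r, of qU mU] by (simp add: abs_le_iff)
        also have "2 * C qU mU * hh t r \<le> 2 * C qU mU * \<delta>"
          using hd C0[of qU mU] by (intro mult_left_mono) auto
        finally have "A * Q \<le> \<rho> qU mU r + 2 * C qU mU * \<delta>" by simp
        moreover have "A * (1 / G + 3 * \<epsilon>) = A * (1 / G + \<epsilon>) + A * \<epsilon> + A * \<epsilon>"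
          by (simp add: algebra_simps)
        ultimately show ?thesis using ev \<delta>U SU by linarith
      qed
      have lo: "B * (1 / G - 3 * \<epsilon>) < B * Q"
      proof -
        have "(\<Sum>i\<le>mL. qL i * Ek t ((real i + 1) * (1/r))) \<le> B * P t r"
          by (rule F2[OF t r]) (use BK in \<open>simp add: K_conv qL_def\<close>)
        then have "(\<Sum>i\<le>mL. qL i * Ek t ((real i + 1) * (1/r))) / (t * H (1/r)) \<le> B * Q"
          using N by (simp add: Q_def divide_right_mono)
        moreover have "\<rho> qL mL r - 2 * C qL mL * hh t r \<le> (\<Sum>i\<le>mL. qL i * Ek t ((real i + 1) * (1/r))) / (t * H (1/r))"
          using est[OF t r, of qL mL] by (simp add: abs_le_iff)
        moreover have "2 * C qL mL * hh t r \<le> 2 * C qL mL * \<delta>"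
          using hd C0[of qL mL] by (intro mult_left_mono) auto
        ultimately have "\<rho> qL mL r - 2 * C qL mL * \<delta> \<le> B * Q" by linarith
        moreover have "B * (1 / G - 3 * \<epsilon>) = B * (1 / G - \<epsilon>) - B * \<epsilon> - B * \<epsilon>"
          by (simp add: algebra_simps)
        ultimately show ?thesis using ev \<delta>L SL by linarith
      qed
      have Qu: "Q < 1 / G + 3 * \<epsilon>" using up A by simp
      have Ql: "1 / G - 3 * \<epsilon> < Q" using lo B by simp
      have eq: "P t r / (1 / Gamma (2 - \<gamma>) * t * H (1 / r)) = G * Q"
        using N G by (simp add: Q_def G_def field_simps)
      have e1: "G * (1 / G + 3 * \<epsilon>) = 1 + \<epsilon>0" using G by (simp add: \<epsilon>_def field_simps)
      have e2: "G * (1 / G - 3 * \<epsilon>) = 1 - \<epsilon>0" using G by (simp add: \<epsilon>_def field_simps)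
      have "G * Q < 1 + \<epsilon>0" using mult_strict_left_mono[OF Qu G] unfolding e1 .
      moreover have "1 - \<epsilon>0 < G * Q" using mult_strict_left_mono[OF Ql G] unfolding e2 .
      ultimately show "\<bar>P t r / (1 / Gamma (2 - \<gamma>) * t * H (1 / r)) - 1\<bar> < \<epsilon>0"
        unfolding eq by (simp add: abs_less_iff)
    qed
    then show "\<exists>\<delta>>0. \<forall>\<^sub>F r in F. \<forall>t>0. r > 0 \<longrightarrow> \<bar>t * \<phi> (1 / r)^2 / H (1 / r)\<bar> < \<delta> \<longrightarrow>
        \<bar>P t r / (1 / Gamma (2 - \<gamma>) * t * H (1 / r)) - 1\<bar> < \<epsilon>0"
      using \<delta> by blast
  qed
qed

lemma pint:
  fixes f :: "'a \<Rightarrow> real"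
  assumes P: "prob_space M" and fm: "f \<in> borel_measurable M" and b: "\<And>x. x \<in> space M \<Longrightarrow> \<bar>f x\<bar> \<le> B"
  shows "integrable M f" "\<bar>integral\<^sup>L M f\<bar> \<le> B"
proof -
  interpret prob_space M by (rule P)
  show I: "integrable M f"
    by (rule integrable_const_bound[of f B]) (use b fm in auto)
  have "\<bar>integral\<^sup>L M f\<bar> \<le> (\<integral>x. \<bar>f x\<bar> \<partial>M)" by (rule integral_abs_bound)
  also have "\<dots> \<le> (\<integral>x. B \<partial>M)"
    by (rule integral_mono) (use I b in auto)
  also have "\<dots> = B" by (simp add: prob_space)
  finally show "\<bar>integral\<^sup>L M f\<bar> \<le> B" .
qed

lemma xexp_bound: "x \<ge> 0 \<Longrightarrow> a > 0 \<Longrightarrow> x * exp (- (a * x)) \<le> 1 / a" for x a :: real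
proof -
  assume x: "x \<ge> 0" and a: "a > 0"
  have "a * x \<le> exp (a * x)" using exp_ge_add_one_self[of "a * x"] by linarith
  then have "x \<le> exp (a * x) / a" using a by (simp add: field_simps)
  then show ?thesis using a by (simp add: exp_minus field_simps)
qed

lemma x2exp_bound: "x \<ge> 0 \<Longrightarrow> a > 0 \<Longrightarrow> x^2 * exp (- (a * x)) \<le> 2 / a^2" for x a :: real
proof -
  assume x: "x \<ge> 0" and a: "a > 0"
  have "1 + a * x + (a * x)^2 / 2 \<le> exp (a * x)" using exp_lower_Taylor_quadratic[of "a * x"] x a by simp
  then have "(a * x)^2 / 2 \<le> exp (a * x)" using x a by (smt (verit) mult_nonneg_nonneg)
  then have "x^2 \<le> 2 * exp (a * x) / a^2" using a by (simp add: field_simps power_mult_distrib)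
  then show ?thesis using a by (simp add: exp_minus field_simps)
qed

lemma taylor_pt:
  fixes x l h :: real
  assumes x: "x \<ge> 0" and l: "l > 0" and h: "\<bar>h\<bar> \<le> l / 2"
  shows "\<bar>exp (- (l + h) * x) - exp (- l * x) + h * (x * exp (- l * x))\<bar> \<le> 4 * h^2 / l^2"
proof -
  have e: "exp (- (l + h) * x) - exp (- l * x) + h * (x * exp (- l * x))
      = exp (- l * x) * (exp (- h * x) - 1 - (- h * x))"
    by (simp add: algebra_simps flip: exp_add)
  have t: "\<bar>exp (- h * x) - 1 - (- h * x)\<bar> \<le> exp \<bar>- h * x\<bar> * (- h * x)^2 / 2"
    by (rule exp_taylor2)
  have "\<bar>- h * x\<bar> = \<bar>h\<bar> * x" using x by (simp add: abs_mult)
  have "exp (- l * x) * exp \<bar>- h * x\<bar> \<le> exp (- ((l/2) * x))"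
  proof -
    have "\<bar>h\<bar> * x \<le> (l/2) * x" using h x by (intro mult_right_mono) auto
    then have "- l * x + \<bar>h\<bar> * x \<le> - ((l/2) * x)" by linarith
    then show ?thesis using \<open>\<bar>- h * x\<bar> = \<bar>h\<bar> * x\<close> by (simp flip: exp_add)
  qed
  have "\<bar>exp (- (l + h) * x) - exp (- l * x) + h * (x * exp (- l * x))\<bar>
      = exp (- l * x) * \<bar>exp (- h * x) - 1 - (- h * x)\<bar>" unfolding e by (simp add: abs_mult)
  also have "\<dots> \<le> exp (- l * x) * (exp \<bar>- h * x\<bar> * (- h * x)^2 / 2)"
    by (intro mult_left_mono t) auto
  also have "\<dots> = (exp (- l * x) * exp \<bar>- h * x\<bar>) * x^2 * (h^2 / 2)"
    by (simp add: power_mult_distrib)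
  also have "\<dots> \<le> exp (- ((l/2) * x)) * x^2 * (h^2 / 2)"
    by (intro mult_right_mono \<open>exp (- l * x) * exp \<bar>- h * x\<bar> \<le> exp (- ((l/2) * x))\<close>) auto
  also have "\<dots> = (x^2 * exp (- ((l/2) * x))) * (h^2 / 2)" by simp
  also have "\<dots> \<le> (2 / (l/2)^2) * (h^2 / 2)"
    by (intro mult_right_mono x2exp_bound x) (use l in auto)
  also have "\<dots> = 4 * h^2 / l^2" using l by (simp add: field_simps power2_eq_square)
  finally show ?thesis .
qed

lemma laplace_deriv:
  fixes X :: "'a \<Rightarrow> real"
  assumes P: "prob_space M" and Xm: "X \<in> borel_measurable M"
    and Xnn: "\<And>\<omega>. \<omega> \<in> space M \<Longrightarrow> X \<omega> \<ge> 0" and l: "l > 0"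
  shows "((\<lambda>l. \<integral>\<omega>. exp (- l * X \<omega>) \<partial>M) has_real_derivative - (\<integral>\<omega>. X \<omega> * exp (- l * X \<omega>) \<partial>M)) (at l)"
proof -
  define g where "g l = (\<integral>\<omega>. exp (- l * X \<omega>) \<partial>M)" for l
  define D where "D = (\<integral>\<omega>. X \<omega> * exp (- l * X \<omega>) \<partial>M)"
  have intE: "integrable M (\<lambda>\<omega>. exp (- c * X \<omega>))" if "c \<ge> 0" for c
    by (rule pint(1)[OF P, of _ 1]) (use Xm Xnn that in \<open>auto simp: mult_nonneg_nonneg\<close>)
  have intD: "integrable M (\<lambda>\<omega>. X \<omega> * exp (- l * X \<omega>))"
    by (rule pint(1)[OF P, of _ "1/l"]) (use Xm Xnn l xexp_bound in auto)
  have bound: "\<bar>(g (l + h) - g l) / h - (- D)\<bar> \<le> 4 / l^2 * \<bar>h\<bar>" if h: "h \<noteq> 0" "\<bar>h\<bar> < l / 2" for h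
  proof -
    have lh: "l + h \<ge> 0" using h l by auto
    have eq: "g (l + h) - g l + h * D = (\<integral>\<omega>. exp (- (l + h) * X \<omega>) - exp (- l * X \<omega>) + h * (X \<omega> * exp (- l * X \<omega>)) \<partial>M)"
      unfolding g_def D_def
      using intE[OF lh] intE[of l] intD l by (simp add: integral_add integral_diff)
    have "\<bar>g (l + h) - g l + h * D\<bar> \<le> 4 * h^2 / l^2"
      unfolding eq
      by (rule pint(2)[OF P]) (use Xm Xnn taylor_pt l h in auto)
    moreover have "(g (l + h) - g l) / h - (- D) = (g (l + h) - g l + h * D) / h"
      using h by (simp add: field_simps)
    ultimately have "\<bar>(g (l + h) - g l) / h - (- D)\<bar> = \<bar>g (l + h) - g l + h * D\<bar> / \<bar>h\<bar>"
      by (simp add: abs_divide)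
    also have "\<dots> \<le> 4 * h^2 / l^2 / \<bar>h\<bar>"
      by (rule divide_right_mono) (use \<open>\<bar>g (l + h) - g l + h * D\<bar> \<le> 4 * h^2 / l^2\<close> in auto)
    also have "\<dots> = 4 / l^2 * \<bar>h\<bar>" using h by (simp add: power2_eq_square field_simps)
    finally show ?thesis .
  qed
  have "((\<lambda>h. (g (l + h) - g l) / h - (- D)) \<longlongrightarrow> 0) (at 0)"
  proof (rule Lim_null_comparison)
    show "\<forall>\<^sub>F h in at 0. norm ((g (l + h) - g l) / h - (- D)) \<le> 4 / l^2 * \<bar>h\<bar>"
      unfolding eventually_at using l bound by (intro exI[of _ "l/2"]) auto
    show "((\<lambda>h. 4 / l^2 * \<bar>h\<bar>) \<longlongrightarrow> 0) (at 0)"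
      by (rule tendsto_eq_intros refl | simp)+
  qed
  then have "((\<lambda>h. (g (l + h) - g l) / h) \<longlongrightarrow> - D) (at 0)"
    by (rule LIM_zero_cancel)
  then show ?thesis unfolding DERIV_def g_def D_def .
qed

lemma ineq_xy:
  fixes x y :: real
  assumes y: "0 \<le> y" "y \<le> x"
  shows "\<bar>1 - exp (- x) - y * exp (- x) - (x - y)\<bar> \<le> 2 * x^2"
proof -
  have x: "x \<ge> 0" using y by simp
  have e1: "1 - x \<le> exp (- x)" using exp_ge_add_one_self[of "- x"] by simp
  have q: "1 + x + x^2 / 2 \<le> exp x" using exp_lower_Taylor_quadratic[OF x] .
  have qpos: "1 + x + x^2 / 2 > 0" using x by (simp add: add_pos_nonneg)
  have "exp (- x) = 1 / exp x" by (simp add: exp_minus inverse_eq_divide)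
  also have "\<dots> \<le> 1 / (1 + x + x^2 / 2)" using q qpos by (intro divide_left_mono) auto
  also have "\<dots> \<le> 1 - x + x^2 / 2"
  proof -
    have "1 \<le> (1 + x + x^2 / 2) * (1 - x + x^2 / 2)"
      using x by (simp add: algebra_simps power2_eq_square power4_eq_xxxx)
    then show ?thesis using qpos by (simp add: field_simps)
  qed
  finally have e2: "exp (- x) \<le> 1 - x + x^2 / 2" .
  have "y * (1 - exp (- x)) \<le> x * x" using y e1 by (intro mult_mono) auto
  moreover have "0 \<le> y * (1 - exp (- x))" using y by (intro mult_nonneg_nonneg) auto
  moreover have "1 - exp (- x) - y * exp (- x) - (x - y) = (1 - exp (- x) - x) + y * (1 - exp (- x))"
    by (simp add: algebra_simps)
  ultimately show ?thesis using e1 e2 x by (simp add: power2_eq_square abs_le_iff) 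
qed

theorem theorem1p1:
  fixes M :: "'a measure" and T :: "real \<Rightarrow> 'a \<Rightarrow> real"
    and \<phi> :: "real \<Rightarrow> real" and \<gamma> :: real
  defines "H \<equiv> (\<lambda>x. \<phi> x - x * deriv \<phi> x)"
  assumes sub: "subordinator M T"
    and lap: "laplace_exponent M T \<phi>"
    and \<gamma>: "0 \<le> \<gamma>" "\<gamma> < 2"
  shows "(regularly_varying (at_right 0) H \<gamma> \<longrightarrow>
           joint_asymp at_top
             (\<lambda>t r. measure M {\<omega> \<in> space M. T t \<omega> \<ge> r})
             (\<lambda>t r. 1 / Gamma (2 - \<gamma>) * t * H (1 / r))
             (\<lambda>t r. t * \<phi> (1 / r)^2 / H (1 / r)))
       \<and> (regularly_varying at_top H \<gamma> \<longrightarrow>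
           joint_asymp (at_right 0)
             (\<lambda>t r. measure M {\<omega> \<in> space M. T t \<omega> \<ge> r})
             (\<lambda>t r. 1 / Gamma (2 - \<gamma>) * t * H (1 / r))
             (\<lambda>t r. t * \<phi> (1 / r)^2 / H (1 / r)))"
proof -
  have P: "prob_space M" and Tm: "\<And>t. t \<ge> 0 \<Longrightarrow> T t \<in> borel_measurable M"
    and paths: "\<And>\<omega>. \<omega> \<in> space M \<Longrightarrow> T 0 \<omega> = 0 \<and> mono_on {0..} (\<lambda>t. T t \<omega>)"
    using sub unfolding subordinator_def by auto
  have Tnn: "0 \<le> T t \<omega>" if "t \<ge> 0" "\<omega> \<in> space M" for t \<omega>
  proof -
    have "T 0 \<omega> \<le> T t \<omega>" using paths[OF that(2)] that(1) mono_onD[of "{0..}" "\<lambda>t. T t \<omega>" 0 t] by auto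
    then show ?thesis using paths[OF that(2)] by simp
  qed
  have lapE: "(\<integral>\<omega>. exp (- l * T t \<omega>) \<partial>M) = exp (- t * \<phi> l)" if "t \<ge> 0" "l > 0" for t l
    using lap that unfolding laplace_exponent_def by auto
  define L where "L t l = (\<integral>\<omega>. exp (- l * T t \<omega>) \<partial>M)" for t l
  define D where "D t l = (\<integral>\<omega>. T t \<omega> * exp (- l * T t \<omega>) \<partial>M)" for t l
  have Lder: "(L t has_real_derivative - D t l) (at l)" if "t \<ge> 0" "l > 0" for t l
    unfolding L_def D_def by (rule laplace_deriv[OF P Tm[OF that(1)] Tnn[OF that(1)] that(2)])
  have Dnn: "0 \<le> D t l" if "t \<ge> 0" "l > 0" for t l
    unfolding D_def by (intro integral_nonneg_AE AE_I2) (use Tnn that in auto)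
  have L1: "L 1 l = exp (- \<phi> l)" if "l > 0" for l using lapE[of 1 l] that by (simp add: L_def)
  have phider0: "(\<phi> has_real_derivative D 1 l / exp (- \<phi> l)) (at l)" if l: "l > 0" for l
  proof -
    have "((\<lambda>l. - ln (L 1 l)) has_real_derivative - ((- D 1 l) / L 1 l)) (at l)"
      using Lder[of 1 l] l L1[OF l] by (auto intro!: derivative_eq_intros)
    then have "((\<lambda>l. - ln (L 1 l)) has_real_derivative D 1 l / exp (- \<phi> l)) (at l)" using L1[OF l] by simp
    then show ?thesis
      by (rule has_field_derivative_transform_within_open[where S="{0<..}"]) (use l L1 in auto)
  qed
  have dphi: "deriv \<phi> l = D 1 l / exp (- \<phi> l)" if "l > 0" for l using DERIV_imp_deriv[OF phider0[OF that]] .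
  have phider: "(\<phi> has_real_derivative deriv \<phi> l) (at l)" if "l > 0" for l
    using phider0[OF that] dphi[OF that] by simp
  have dphinn: "0 \<le> deriv \<phi> l" if "l > 0" for l using dphi[OF that] Dnn[of 1 l] that by simp
  have phinn: "0 \<le> \<phi> l" if l: "l > 0" for l
  proof -
    note [measurable] = Tm[of 1, simplified]
    have "\<bar>L 1 l\<bar> \<le> 1" unfolding L_def
      by (rule pint(2)[OF P]) (use Tnn l in \<open>auto simp: mult_nonneg_nonneg\<close>)
    then have "exp (- \<phi> l) \<le> 1" using L1[OF l] by simp
    then show ?thesis by simp
  qed
  have Dt: "D t l = t * deriv \<phi> l * exp (- t * \<phi> l)" if t: "t \<ge> 0" and l: "l > 0" for t l
  proof -
    have "((\<lambda>l. exp (- t * \<phi> l)) has_real_derivative exp (- t * \<phi> l) * (- t * deriv \<phi> l)) (at l)"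
      by (rule derivative_eq_intros refl phider[OF l])+ simp
    then have "(L t has_real_derivative exp (- t * \<phi> l) * (- t * deriv \<phi> l)) (at l)"
      by (rule has_field_derivative_transform_within_open[where S="{0<..}"]) (use l t lapE in \<open>auto simp: L_def\<close>)
    from DERIV_unique[OF Lder[OF t l] this] show ?thesis by (simp add: algebra_simps)
  qed
  define Ek where "Ek t l = (\<integral>\<omega>. kf (l * T t \<omega>) \<partial>M)" for t l
  have kf_meas: "(\<lambda>\<omega>. kf (c * T t \<omega>)) \<in> borel_measurable M" if "t \<ge> 0" for c t
  proof -
    note [measurable] = Tm[OF that]
    show ?thesis unfolding kf_def by measurable
  qed
  have kf_int: "integrable M (\<lambda>\<omega>. kf (c * T t \<omega>))" if "t \<ge> 0" "c \<ge> 0" for c t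
    by (rule pint(1)[OF P kf_meas[OF that(1)], where B=1])
       (use Tnn that kf_nonneg kf_le1 in \<open>auto simp: mult_nonneg_nonneg\<close>)
  have intE: "integrable M (\<lambda>\<omega>. exp (- l * T t \<omega>))" if "t \<ge> 0" "l \<ge> 0" for t l
  proof -
    note [measurable] = Tm[OF that(1)]
    show ?thesis by (rule pint(1)[OF P _, where B=1]) (use Tnn that in \<open>auto simp: mult_nonneg_nonneg\<close>)
  qed
  have intD: "integrable M (\<lambda>\<omega>. T t \<omega> * exp (- l * T t \<omega>))" if "t \<ge> 0" "l > 0" for t l
  proof -
    note [measurable] = Tm[OF that(1)]
    show ?thesis by (rule pint(1)[OF P _, where B="1/l"]) (use Tnn that xexp_bound in auto)
  qed
  have Ek_eq: "Ek t l = 1 - exp (- t * \<phi> l) - l * D t l" if t: "t \<ge> 0" and l: "l > 0" for t l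
  proof -
    have "kf (l * T t \<omega>) = 1 - exp (- l * T t \<omega>) - l * (T t \<omega> * exp (- l * T t \<omega>))" for \<omega>
      by (simp add: kf_def algebra_simps)
    then have "Ek t l = (\<integral>\<omega>. 1 - exp (- l * T t \<omega>) - l * (T t \<omega> * exp (- l * T t \<omega>)) \<partial>M)"
      by (simp add: Ek_def)
    also have "\<dots> = 1 - L t l - l * D t l"
    proof -
      interpret prob_space M by (rule P)
      have i1: "integrable M (\<lambda>\<omega>. 1 - exp (- l * T t \<omega>))"
        using intE[OF t, of l] l by (intro Bochner_Integration.integrable_diff) auto
      have i2: "integrable M (\<lambda>\<omega>. l * (T t \<omega> * exp (- l * T t \<omega>)))"
        using intD[OF t l] by (intro integrable_mult_right)
      have "(\<integral>\<omega>. 1 - exp (- l * T t \<omega>) - l * (T t \<omega> * exp (- l * T t \<omega>)) \<partial>M)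
          = (\<integral>\<omega>. 1 - exp (- l * T t \<omega>) \<partial>M) - (\<integral>\<omega>. l * (T t \<omega> * exp (- l * T t \<omega>)) \<partial>M)"
        by (rule Bochner_Integration.integral_diff[OF i1 i2])
      also have "(\<integral>\<omega>. 1 - exp (- l * T t \<omega>) \<partial>M) = 1 - L t l"
        unfolding L_def using intE[OF t, of l] l
        by (subst Bochner_Integration.integral_diff) (auto simp: prob_space)
      also have "(\<integral>\<omega>. l * (T t \<omega> * exp (- l * T t \<omega>)) \<partial>M) = l * D t l"
        unfolding D_def by simp
      finally show ?thesis .
    qed
    finally show ?thesis using lapE[OF t l] by (simp add: L_def)
  qed
  have F1: "A * measure M {\<omega> \<in> space M. T t \<omega> \<ge> r} \<le> (\<Sum>i\<le>m. q i * Ek t ((real i + 1) * (1/r)))"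
    if t: "t > 0" and r: "r > 0"
    and hyp: "\<And>x. x \<ge> 0 \<Longrightarrow> A * (if 1 \<le> x then 1 else 0) \<le> (\<Sum>i\<le>m. q i * kf ((real i + 1) * x))"
    for t r A q m
  proof -
    define S where "S = {\<omega> \<in> space M. T t \<omega> \<ge> r}"
    have [measurable]: "T t \<in> borel_measurable M" using Tm[of t] t by simp
    have Sm: "S \<in> sets M" unfolding S_def by measurable
    have "A * measure M S = (\<integral>\<omega>. A * indicator S \<omega> \<partial>M)"
      using Sm by (simp add: Int_absorb2 sets.sets_into_space)
    also have "\<dots> \<le> (\<integral>\<omega>. (\<Sum>i\<le>m. q i * kf ((real i + 1) * (1/r) * T t \<omega>)) \<partial>M)"
    proof (rule integral_mono)
      show "integrable M (\<lambda>\<omega>. A * indicator S \<omega>)"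
        using Sm P by (intro integrable_mult_right integrable_real_indicator) (use finite_measure.emeasure_finite[of M S] P[unfolded prob_space_def] in \<open>auto simp: less_top[symmetric]\<close>)
      show "integrable M (\<lambda>\<omega>. \<Sum>i\<le>m. q i * kf ((real i + 1) * (1/r) * T t \<omega>))"
        using t r by (intro Bochner_Integration.integrable_sum integrable_mult_right kf_int) auto
      fix \<omega> assume \<omega>: "\<omega> \<in> space M"
      have x: "T t \<omega> / r \<ge> 0" using Tnn[of t \<omega>] t r \<omega> by simp
      have ind: "indicator S \<omega> = (if 1 \<le> T t \<omega> / r then 1 else (0::real))"
        using \<omega> r by (simp add: S_def indicator_def field_simps)
      show "A * indicator S \<omega> \<le> (\<Sum>i\<le>m. q i * kf ((real i + 1) * (1/r) * T t \<omega>))"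
        unfolding ind using hyp[OF x] by simp
    qed
    also have "\<dots> = (\<Sum>i\<le>m. (\<integral>\<omega>. q i * kf ((real i + 1) * (1/r) * T t \<omega>) \<partial>M))"
      by (rule Bochner_Integration.integral_sum) (use t r in \<open>intro integrable_mult_right kf_int, auto\<close>)
    also have "\<dots> = (\<Sum>i\<le>m. q i * Ek t ((real i + 1) * (1/r)))"
      by (simp add: Ek_def)
    finally show ?thesis by (simp add: S_def)
  qed
  have F2: "(\<Sum>i\<le>m. q i * Ek t ((real i + 1) * (1/r))) \<le> B * measure M {\<omega> \<in> space M. T t \<omega> \<ge> r}"
    if t: "t > 0" and r: "r > 0"
    and hyp: "\<And>x. x \<ge> 0 \<Longrightarrow> (\<Sum>i\<le>m. q i * kf ((real i + 1) * x)) \<le> B * (if 1 \<le> x then 1 else 0)"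
    for t r B q m
  proof -
    define S where "S = {\<omega> \<in> space M. T t \<omega> \<ge> r}"
    have [measurable]: "T t \<in> borel_measurable M" using Tm[of t] t by simp
    have Sm: "S \<in> sets M" unfolding S_def by measurable
    have "(\<Sum>i\<le>m. q i * Ek t ((real i + 1) * (1/r))) = (\<Sum>i\<le>m. (\<integral>\<omega>. q i * kf ((real i + 1) * (1/r) * T t \<omega>) \<partial>M))"
      by (simp add: Ek_def)
    also have "\<dots> = (\<integral>\<omega>. (\<Sum>i\<le>m. q i * kf ((real i + 1) * (1/r) * T t \<omega>)) \<partial>M)"
      by (rule Bochner_Integration.integral_sum[symmetric]) (use t r in \<open>intro integrable_mult_right kf_int, auto\<close>)
    also have "\<dots> \<le> (\<integral>\<omega>. B * indicator S \<omega> \<partial>M)"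
    proof (rule integral_mono)
      show "integrable M (\<lambda>\<omega>. B * indicator S \<omega>)"
        using Sm P by (intro integrable_mult_right integrable_real_indicator) (use finite_measure.emeasure_finite[of M S] P[unfolded prob_space_def] in \<open>auto simp: less_top[symmetric]\<close>)
      show "integrable M (\<lambda>\<omega>. \<Sum>i\<le>m. q i * kf ((real i + 1) * (1/r) * T t \<omega>))"
        using t r by (intro Bochner_Integration.integrable_sum integrable_mult_right kf_int) auto
      fix \<omega> assume \<omega>: "\<omega> \<in> space M"
      have x: "T t \<omega> / r \<ge> 0" using Tnn[of t \<omega>] t r \<omega> by simp
      have ind: "indicator S \<omega> = (if 1 \<le> T t \<omega> / r then 1 else (0::real))"
        using \<omega> r by (simp add: S_def indicator_def field_simps)
      show "(\<Sum>i\<le>m. q i * kf ((real i + 1) * (1/r) * T t \<omega>)) \<le> B * indicator S \<omega>"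
        unfolding ind using hyp[OF x] by simp
    qed
    also have "\<dots> = B * measure M S"
      using Sm by (simp add: Int_absorb2 sets.sets_into_space)
    finally show ?thesis by (simp add: S_def)
  qed
  have main: "joint_asymp F
             (\<lambda>t r. measure M {\<omega> \<in> space M. T t \<omega> \<ge> r})
             (\<lambda>t r. 1 / Gamma (2 - \<gamma>) * t * H (1 / r))
             (\<lambda>t r. t * \<phi> (1 / r)^2 / H (1 / r))"
    if Hpos: "\<And>s. s > 0 \<Longrightarrow> H s > 0"
    and RVF: "\<And>c. c > 0 \<Longrightarrow> ((\<lambda>r. H (c * (1/r)) / H (1/r)) \<longlongrightarrow> c powr \<gamma>) F" for F
  proof (rule core[where Ek=Ek and \<phi>=\<phi>, OF \<gamma> Hpos RVF])
    show "A * measure M {\<omega> \<in> space M. T t \<omega> \<ge> r} \<le> (\<Sum>i\<le>m. q i * Ek t ((real i + 1) * (1/r)))"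
      if "t > 0" "r > 0" "\<And>x. x \<ge> 0 \<Longrightarrow> A * (if 1 \<le> x then 1 else 0) \<le> (\<Sum>i\<le>m. q i * kf ((real i + 1) * x))"
      for t r A q m using F1[OF that] .
    show "(\<Sum>i\<le>m. q i * Ek t ((real i + 1) * (1/r))) \<le> B * measure M {\<omega> \<in> space M. T t \<omega> \<ge> r}"
      if "t > 0" "r > 0" "\<And>x. x \<ge> 0 \<Longrightarrow> (\<Sum>i\<le>m. q i * kf ((real i + 1) * x)) \<le> B * (if 1 \<le> x then 1 else 0)"
      for t r B q m using F2[OF that] .
    show "\<bar>Ek t l - t * H l\<bar> \<le> 2 * (t * \<phi> l)^2" if t: "t > 0" and l: "l > 0" for t l
    proof -
      define x where "x = t * \<phi> l"
      define y where "y = t * (l * deriv \<phi> l)"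
      have y0: "0 \<le> y" using t l dphinn[OF l] by (simp add: y_def)
      have "l * deriv \<phi> l \<le> \<phi> l" using Hpos[OF l] by (simp add: H_def)
      then have yx: "y \<le> x" using t by (simp add: x_def y_def mult_left_mono)
      have "Ek t l = 1 - exp (- x) - y * exp (- x)"
        using Ek_eq[of t l] Dt[of t l] t l by (simp add: x_def y_def)
      moreover have "t * H l = x - y" by (simp add: H_def x_def y_def algebra_simps)
      ultimately show ?thesis using ineq_xy[OF y0 yx] by (simp add: x_def)
    qed
    show "0 \<le> \<phi> (c * l) \<and> \<phi> (c * l) \<le> c * \<phi> l" if c: "c \<ge> 1" and l: "l > 0" for c l
    proof
      show "0 \<le> \<phi> (c * l)" using phinn[of "c * l"] c l by simp
      have "\<phi> (c * l) / (c * l) \<le> \<phi> l / l"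
      proof (rule DERIV_nonpos_imp_nonincreasing[where f = "\<lambda>\<mu>. \<phi> \<mu> / \<mu>"])
        show "l \<le> c * l" using c l by simp
        fix \<mu> assume \<mu>: "l \<le> \<mu>" "\<mu> \<le> c * l"
        then have \<mu>0: "\<mu> > 0" using l by simp
        have "((\<lambda>\<mu>. \<phi> \<mu> / \<mu>) has_real_derivative (deriv \<phi> \<mu> * \<mu> - \<phi> \<mu> * 1) / (\<mu> * \<mu>)) (at \<mu>)"
          by (rule DERIV_divide[OF phider[OF \<mu>0] DERIV_ident]) (use \<mu>0 in simp)
        moreover have "(deriv \<phi> \<mu> * \<mu> - \<phi> \<mu> * 1) / (\<mu> * \<mu>) \<le> 0"
        proof -
          have "deriv \<phi> \<mu> * \<mu> - \<phi> \<mu> * 1 = - H \<mu>" by (simp add: H_def algebra_simps)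
          then show ?thesis using Hpos[OF \<mu>0] \<mu>0 by simp
        qed
        ultimately show "\<exists>y. ((\<lambda>\<mu>. \<phi> \<mu> / \<mu>) has_real_derivative y) (at \<mu>) \<and> y \<le> 0" by blast
      qed
      then show "\<phi> (c * l) \<le> c * \<phi> l" using c l by (simp add: field_simps)
    qed
  qed
  show ?thesis
  proof (intro conjI impI)
    assume RV: "regularly_varying (at_right 0) H \<gamma>"
    show "joint_asymp at_top (\<lambda>t r. measure M {\<omega> \<in> space M. T t \<omega> \<ge> r})
             (\<lambda>t r. 1 / Gamma (2 - \<gamma>) * t * H (1 / r)) (\<lambda>t r. t * \<phi> (1 / r)^2 / H (1 / r))"
    proof (rule main)
      show "H s > 0" if "s > 0" for s using RV that unfolding regularly_varying_def by blast
      fix c :: real assume c: "c > 0"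
      have "((\<lambda>s. H (c * s) / H s) \<longlongrightarrow> c powr \<gamma>) (at_right 0)"
        using RV c unfolding regularly_varying_def by blast
      from filterlim_compose[OF this filterlim_inverse_at_right_top]
      show "((\<lambda>r. H (c * (1/r)) / H (1/r)) \<longlongrightarrow> c powr \<gamma>) at_top" by (simp add: inverse_eq_divide)
    qed
  next
    assume RV: "regularly_varying at_top H \<gamma>"
    show "joint_asymp (at_right 0) (\<lambda>t r. measure M {\<omega> \<in> space M. T t \<omega> \<ge> r})
             (\<lambda>t r. 1 / Gamma (2 - \<gamma>) * t * H (1 / r)) (\<lambda>t r. t * \<phi> (1 / r)^2 / H (1 / r))"
    proof (rule main)
      show "H s > 0" if "s > 0" for s using RV that unfolding regularly_varying_def by blast
      fix c :: real assume c: "c > 0"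
      have "((\<lambda>s. H (c * s) / H s) \<longlongrightarrow> c powr \<gamma>) at_top"
        using RV c unfolding regularly_varying_def by blast
      from filterlim_compose[OF this filterlim_inverse_at_top_right]
      show "((\<lambda>r. H (c * (1/r)) / H (1/r)) \<longlongrightarrow> c powr \<gamma>) (at_right 0)" by (simp add: inverse_eq_divide)
    qed
  qed
qed

end
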